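(* Let $\xi:I\to\mathbb{R}^3$ be as in the context with $k>0$ and $\tau\ne0$ on the open interval $I$, and let $e$ be its evolute. Then there exists an orientation-preserving isometry $M$ of $\mathbb{R}^3$ with $M(\xi(t))=e(t)$ for all $t\in I$ if and only if $k=|\tau|$ on $I$ and either (a) $k$ is constant on $I$ (a helix with equal curvature and absolute torsion), or (b) there exist $c>0$ and $t_0\notin I$ such that $k(t)=c\,|t-t_0|^{-1/2}$ for all $t\in I$. (The case $\tau>0$ is the curves with $k=\tau$; the case $\tau<0$ is their mirror images.)
   Context: $\xi$ is a smooth arclength-parametrized curve with curvature $k>0$, $r=1/k$, torsion $\tau$ and Frenet frame $(\mathbf{t},\mathbf{n},\mathbf{b})$. Its evolute is the curve $e(t)=\xi(t)+r(t)\mathbf{n}(t)+\frac{r'(t)}{\tau(t)}\mathbf{b}(t)$, the locus of centers of osculating spheres, parametrized by the same parameter $t$. *)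

theory Defs
  imports "HOL-Analysis.Analysis"
begin

type_synonym vec3 = "real^3"

definition smooth_on :: "real set \<Rightarrow> (real \<Rightarrow> vec3) \<Rightarrow> bool" where
  "smooth_on I f \<longleftrightarrow> (\<exists>D :: nat \<Rightarrow> real \<Rightarrow> vec3. D 0 = f \<and>
     (\<forall>m. \<forall>t\<in>I. (D m has_vector_derivative D (Suc m) t) (at t)))"

definition vd :: "(real \<Rightarrow> vec3) \<Rightarrow> real \<Rightarrow> vec3" where
  "vd f t = vector_derivative f (at t)"

definition tangent :: "(real \<Rightarrow> vec3) \<Rightarrow> real \<Rightarrow> vec3" where
  "tangent \<xi> t = vd \<xi> t"

definition curvature :: "(real \<Rightarrow> vec3) \<Rightarrow> real \<Rightarrow> real" where
  "curvature \<xi> t = norm (vd (vd \<xi>) t)"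

definition normal :: "(real \<Rightarrow> vec3) \<Rightarrow> real \<Rightarrow> vec3" where
  "normal \<xi> t = (1 / curvature \<xi> t) *\<^sub>R vd (vd \<xi>) t"

definition binormal :: "(real \<Rightarrow> vec3) \<Rightarrow> real \<Rightarrow> vec3" where
  "binormal \<xi> t = cross3 (tangent \<xi> t) (normal \<xi> t)"

text \<open>Torsion with the Frenet convention b' = - tau n.\<close>
definition torsion :: "(real \<Rightarrow> vec3) \<Rightarrow> real \<Rightarrow> real" where
  "torsion \<xi> t = - (vd (binormal \<xi>) t \<bullet> normal \<xi> t)"

definition evolute :: "(real \<Rightarrow> vec3) \<Rightarrow> real \<Rightarrow> vec3" where
  "evolute \<xi> t = \<xi> t + (1 / curvature \<xi> t) *\<^sub>R normal \<xi> t
     + (deriv (\<lambda>s. 1 / curvature \<xi> s) t / torsion \<xi> t) *\<^sub>R binormal \<xi> t"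

end

theory Submission
  imports Defs
begin


lemma bb_cross: "bounded_bilinear (cross3 :: real^3 \<Rightarrow> real^3 \<Rightarrow> real^3)"
  using bilinear_conv_bounded_bilinear bilinear_cross by blast

lemma cross_vd:
  assumes "(f has_vector_derivative f') (at x)" "(g has_vector_derivative g') (at x)"
  shows "((\<lambda>s. cross3 (f s) (g s)) has_vector_derivative (cross3 (f x) g' + cross3 f' (g x))) (at x)"
  using bounded_bilinear.has_vector_derivative[OF bb_cross assms] .

lemma inner_vd:
  fixes f g :: "real \<Rightarrow> real^3"
  assumes "(f has_vector_derivative f') (at x)" "(g has_vector_derivative g') (at x)"
  shows "((\<lambda>s. f s \<bullet> g s) has_real_derivative (f x \<bullet> g' + f' \<bullet> g x)) (at x)"
  using bounded_bilinear.has_vector_derivative[OF bounded_bilinear_inner assms]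
  by (simp add: has_real_derivative_iff_has_vector_derivative)

lemma norm_vd:
  fixes f :: "real \<Rightarrow> real^3"
  assumes "(f has_vector_derivative f') (at x)" "f x \<noteq> 0"
  shows "((\<lambda>s. norm (f s)) has_real_derivative ((f x \<bullet> f') / norm (f x))) (at x)"
proof -
  have n: "norm (f s) = sqrt (f s \<bullet> f s)" for s by (simp add: norm_eq_sqrt_inner)
  have p: "0 < f x \<bullet> f x" using assms(2) by simp
  have "((\<lambda>s. sqrt (f s \<bullet> f s)) has_real_derivative (inverse (sqrt (f x \<bullet> f x)) / 2) * (f x \<bullet> f' + f' \<bullet> f x)) (at x)"
    by (rule DERIV_chain2[OF DERIV_real_sqrt[OF p] inner_vd[OF assms(1) assms(1)]])
  moreover have "(inverse (sqrt (f x \<bullet> f x)) / 2) * (f x \<bullet> f' + f' \<bullet> f x) = (f x \<bullet> f') / norm (f x)"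
    by (simp add: n inner_commute field_simps)
  ultimately show ?thesis by (simp add: n)
qed

lemma deriv_zero_const_on_open:
  fixes f :: "real \<Rightarrow> real"
  assumes "open I" "x \<in> I" "\<forall>s\<in>I. f s = c" "(f has_real_derivative d) (at x)"
  shows "d = 0"
proof -
  have "((\<lambda>s. c) has_real_derivative d) (at x)"
    using assms has_field_derivative_transform_within_open by fastforce
  then show ?thesis using DERIV_const DERIV_unique by blast
qed




lemma expand3:
  fixes u v x :: "real^3"
  assumes "u \<bullet> u = 1" "v \<bullet> v = 1" "u \<bullet> v = 0"
  shows "x = (x \<bullet> u) *\<^sub>R u + (x \<bullet> v) *\<^sub>R v + (x \<bullet> cross3 u v) *\<^sub>R cross3 u v"
proof -
  define w where "w = cross3 u v"
  define y where "y = x - (x \<bullet> u) *\<^sub>R u - (x \<bullet> v) *\<^sub>R v"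
  have yu: "y \<bullet> u = 0" "y \<bullet> v = 0" using assms by (auto simp: y_def algebra_simps inner_commute)
  have "cross3 y w = 0" unfolding w_def Lagrange using yu by simp
  then have "cross3 w (cross3 y w) = 0" by simp
  then have "(w \<bullet> w) *\<^sub>R y - (w \<bullet> y) *\<^sub>R w = 0" by (simp add: Lagrange)
  moreover have "w \<bullet> w = 1"
  proof -
    have "(norm w)^2 = 1" using norm_cross_dot[of u v] assms unfolding w_def
      by (simp add: norm_eq_sqrt_inner)
    then show ?thesis by (simp add: power2_norm_eq_inner)
  qed
  ultimately have "y = (w \<bullet> y) *\<^sub>R w" by simp
  moreover have "w \<bullet> y = x \<bullet> w" unfolding y_def w_def
    by (simp add: inner_diff_right dot_cross_self inner_commute)
  ultimately show ?thesis unfolding y_def w_def by (simp add: algebra_simps)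
qed




locale frenet =
  fixes \<xi> :: "real \<Rightarrow> real^3" and I :: "real set" and D :: "nat \<Rightarrow> real \<Rightarrow> real^3"
  assumes op: "open I" and iv: "is_interval I"
    and D0: "D 0 = \<xi>" and Dd: "\<And>m t. t \<in> I \<Longrightarrow> (D m has_vector_derivative D (Suc m) t) (at t)"
    and unit: "\<And>t. t \<in> I \<Longrightarrow> norm (D 1 t) = 1"
    and kpos: "\<And>t. t \<in> I \<Longrightarrow> D 2 t \<noteq> 0"
begin

definition "k s = norm (D 2 s)"
definition "kd s = (D 2 s \<bullet> D 3 s) / k s"
definition "N s = (1 / k s) *\<^sub>R D 2 s"
definition "Nd s = (1 / k s) *\<^sub>R D 3 s - (kd s / (k s)^2) *\<^sub>R D 2 s"
definition "T s = D 1 s"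
definition "B s = cross3 (T s) (N s)"
definition "tau s = B s \<bullet> Nd s"

lemma kp: "t \<in> I \<Longrightarrow> k t > 0" using kpos by (simp add: k_def)

lemma Dd': "t \<in> I \<Longrightarrow> (D m has_vector_derivative D (Suc m) t) (at t)" using Dd .

lemma D01: "t \<in> I \<Longrightarrow> (\<xi> has_vector_derivative D 1 t) (at t)"
  using Dd'[of t 0] D0 by simp
lemma D12: "t \<in> I \<Longrightarrow> (D 1 has_vector_derivative D 2 t) (at t)"
  using Dd'[of t 1] by (simp add: numeral_2_eq_2)
lemma D23: "t \<in> I \<Longrightarrow> (D 2 has_vector_derivative D 3 t) (at t)"
  using Dd'[of t 2] by (simp add: numeral_3_eq_3 numeral_2_eq_2)

lemma contD: "continuous_on I (D m)"
  using Dd op by (intro continuous_at_imp_continuous_on ballI has_vector_derivative_continuous) blast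

lemma kder: "t \<in> I \<Longrightarrow> (k has_real_derivative kd t) (at t)"
  unfolding k_def[abs_def] kd_def using norm_vd[OF D23[of t]] kpos by (simp add: k_def)

lemma rder: "t \<in> I \<Longrightarrow> ((\<lambda>s. 1 / k s) has_real_derivative (- kd t / (k t)^2)) (at t)"
  using kp[of t] by (auto intro!: derivative_eq_intros kder simp: field_simps power2_eq_square)

lemma Nder: "t \<in> I \<Longrightarrow> (N has_vector_derivative Nd t) (at t)"
  unfolding N_def[abs_def] Nd_def
  using has_vector_derivative_scaleR[OF rder D23] by (simp add: algebra_simps)

lemma Tder: "t \<in> I \<Longrightarrow> (T has_vector_derivative k t *\<^sub>R N t) (at t)"
  unfolding T_def[abs_def] using D12[of t] kp[of t] by (simp add: N_def)

lemma vd1: "t \<in> I \<Longrightarrow> vd \<xi> t = T t"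
  unfolding vd_def T_def using D01[of t] by (simp add: vector_derivative_at)

lemma vd2: "t \<in> I \<Longrightarrow> vd (vd \<xi>) t = D 2 t"
proof -
  assume t: "t \<in> I"
  have "(vd \<xi> has_vector_derivative D 2 t) (at t)"
    by (rule has_vector_derivative_transform_within_open[OF D12[OF t] op t])
       (simp add: vd1 T_def)
  then show ?thesis by (simp add: vd_def vector_derivative_at)
qed

lemma curv: "t \<in> I \<Longrightarrow> curvature \<xi> t = k t" by (simp add: curvature_def vd2 k_def)
lemma nrm: "t \<in> I \<Longrightarrow> normal \<xi> t = N t" by (simp add: normal_def curv vd2 N_def)
lemma bin: "t \<in> I \<Longrightarrow> binormal \<xi> t = B t" by (simp add: binormal_def tangent_def vd1 nrm B_def)

lemma Bder0: "t \<in> I \<Longrightarrow> (B has_vector_derivative (cross3 (T t) (Nd t) + cross3 (k t *\<^sub>R N t) (N t))) (at t)"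
  unfolding B_def[abs_def] by (rule cross_vd[OF Tder Nder])

lemma tors: "t \<in> I \<Longrightarrow> torsion \<xi> t = tau t"
proof -
  assume t: "t \<in> I"
  have "(binormal \<xi> has_vector_derivative (cross3 (T t) (Nd t) + cross3 (k t *\<^sub>R N t) (N t))) (at t)"
    by (rule has_vector_derivative_transform_within_open[OF Bder0[OF t] op t]) (simp add: bin)
  then have "vd (binormal \<xi>) t = cross3 (T t) (Nd t)"
    by (simp add: vd_def vector_derivative_at cross_mult_left)
  then show ?thesis
    by (simp add: torsion_def nrm[OF t] tau_def B_def cross_triple[of "T t" "Nd t"] cross_triple[of "T t" "N t"])
       (metis cross_skew inner_minus_left)
qed

lemma rderiv: "t \<in> I \<Longrightarrow> deriv (\<lambda>s. 1 / curvature \<xi> s) t = - kd t / (k t)^2"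
proof -
  assume t: "t \<in> I"
  have "((\<lambda>s. 1 / curvature \<xi> s) has_real_derivative (- kd t / (k t)^2)) (at t)"
    by (rule has_field_derivative_transform_within_open[OF rder[OF t] op t]) (simp add: curv)
  then show ?thesis by (rule DERIV_imp_deriv)
qed


lemma TT: "t \<in> I \<Longrightarrow> T t \<bullet> T t = 1"
  using unit[of t] by (simp add: T_def norm_eq_1)

lemma TD2: "t \<in> I \<Longrightarrow> T t \<bullet> D 2 t = 0"
proof -
  assume t: "t \<in> I"
  have "((\<lambda>s. T s \<bullet> T s) has_real_derivative (T t \<bullet> D 2 t + D 2 t \<bullet> T t)) (at t)"
    unfolding T_def[abs_def] using inner_vd[OF D12[OF t] D12[OF t]] by (simp add: T_def)
  from deriv_zero_const_on_open[OF op t _ this, of 1] TT show ?thesis by (simp add: inner_commute)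
qed

lemma TN: "t \<in> I \<Longrightarrow> T t \<bullet> N t = 0" by (simp add: N_def TD2)
lemma NN: "t \<in> I \<Longrightarrow> N t \<bullet> N t = 1"
  using kp[of t] by (simp add: N_def k_def power2_norm_eq_inner[symmetric] power2_eq_square)

lemma NNd: "t \<in> I \<Longrightarrow> N t \<bullet> Nd t = 0"
proof -
  assume t: "t \<in> I"
  from deriv_zero_const_on_open[OF op t _ inner_vd[OF Nder[OF t] Nder[OF t]], of 1] NN
  show ?thesis by (simp add: inner_commute)
qed

lemma TNd: "t \<in> I \<Longrightarrow> T t \<bullet> Nd t = - k t"
proof -
  assume t: "t \<in> I"
  from deriv_zero_const_on_open[OF op t _ inner_vd[OF Tder[OF t] Nder[OF t]], of 0] TN NN[OF t]
  show ?thesis by simp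
qed

lemma BB: "t \<in> I \<Longrightarrow> B t \<bullet> B t = 1"
proof -
  assume t: "t \<in> I"
  have "(norm (B t))^2 = 1" using norm_cross_dot[of "T t" "N t"] TN[OF t] TT[OF t] NN[OF t]
    by (simp add: B_def norm_eq_sqrt_inner)
  then show ?thesis by (simp add: power2_norm_eq_inner)
qed
lemma TB: "T t \<bullet> B t = 0" by (simp add: B_def dot_cross_self)
lemma NB: "N t \<bullet> B t = 0" by (simp add: B_def dot_cross_self)

lemma Nd_eq: "t \<in> I \<Longrightarrow> Nd t = (- k t) *\<^sub>R T t + tau t *\<^sub>R B t"
proof -
  assume t: "t \<in> I"
  have "Nd t = (Nd t \<bullet> T t) *\<^sub>R T t + (Nd t \<bullet> N t) *\<^sub>R N t + (Nd t \<bullet> cross3 (T t) (N t)) *\<^sub>R cross3 (T t) (N t)"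
    by (rule expand3[OF TT[OF t] NN[OF t] TN[OF t]])
  then show ?thesis using TNd[OF t] NNd[OF t]
    by (simp add: inner_commute B_def tau_def)
qed

lemma Bder: "t \<in> I \<Longrightarrow> (B has_vector_derivative (- tau t) *\<^sub>R N t) (at t)"
proof -
  assume t: "t \<in> I"
  have "cross3 (T t) (Nd t) + cross3 (k t *\<^sub>R N t) (N t) = (- tau t) *\<^sub>R N t"
    using TT[OF t] TN[OF t]
    by (simp add: Nd_eq[OF t] cross_add_right Cross3.right_diff_distrib cross_mult_right cross_mult_left B_def Lagrange)
  then show ?thesis using Bder0[OF t] by simp
qed

lemma Nder': "t \<in> I \<Longrightarrow> (N has_vector_derivative ((- k t) *\<^sub>R T t + tau t *\<^sub>R B t)) (at t)"
  using Nder Nd_eq by simp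

lemma BN: "cross3 (B t) (N t) = - T t" if "t \<in> I"
  using that TT[OF that] TN[OF that] NN[OF that]
  by (simp add: B_def cross_skew[of _ "N t"] Lagrange inner_commute)

lemma cont_k: "continuous_on I k"
  unfolding k_def[abs_def] by (intro continuous_intros contD)
lemma cont_T: "continuous_on I T"
  unfolding T_def[abs_def] by (intro continuous_intros contD)
lemma cont_N: "continuous_on I N"
  unfolding N_def[abs_def] by (intro continuous_intros contD cont_k) (metis kp less_irrefl)+
lemma cont_B: "continuous_on I B"
  unfolding B_def[abs_def] by (intro continuous_on_cross cont_T cont_N)
lemma cont_tau: "continuous_on I tau"
  unfolding tau_def[abs_def] Nd_def kd_def by (intro continuous_intros contD cont_k cont_B) (use kp in \<open>fastforce\<close>)+

end



lemma cross_unit: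
  fixes u v :: "real^3"
  assumes "u \<bullet> u = 1" "v \<bullet> v = 1" "u \<bullet> v = 0"
  shows "cross3 u v \<bullet> cross3 u v = 1"
proof -
  have "(norm (cross3 u v))^2 = 1" using norm_cross_dot[of u v] assms
    by (simp add: norm_eq_sqrt_inner)
  then show ?thesis by (simp add: power2_norm_eq_inner)
qed

lemma frame_rot:
  fixes u v u' v' :: "real^3"
  assumes "u \<bullet> u = 1" "v \<bullet> v = 1" "u \<bullet> v = 0"
     "u' \<bullet> u' = 1" "v' \<bullet> v' = 1" "u' \<bullet> v' = 0"
  shows "\<exists>A. rotation_matrix A \<and> A *v u = u' \<and> A *v v = v' \<and> A *v cross3 u v = cross3 u' v'"
proof -
  define w where "w = cross3 u v"
  define w' where "w' = cross3 u' v'"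
  have ww: "w \<bullet> w = 1" "w' \<bullet> w' = 1" using assms by (simp_all add: w_def w'_def cross_unit)
  have ow: "u \<bullet> w = 0" "v \<bullet> w = 0" "u' \<bullet> w' = 0" "v' \<bullet> w' = 0"
    unfolding w_def w'_def by (simp_all add: dot_cross_self)
  define f where "f x = (x \<bullet> u) *\<^sub>R u' + (x \<bullet> v) *\<^sub>R v' + (x \<bullet> w) *\<^sub>R w'" for x
  have lin: "linear f"
    apply (rule linearI) apply (simp add: f_def inner_add_left scaleR_add_left) by (simp add: f_def scaleR_add_right)
  have ex: "x = (x \<bullet> u) *\<^sub>R u + (x \<bullet> v) *\<^sub>R v + (x \<bullet> w) *\<^sub>R w" for x
    unfolding w_def by (rule expand3[OF assms(1-3)])
  have ip: "f x \<bullet> f y = x \<bullet> y" for x y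
  proof -
    have "x \<bullet> y = ((x \<bullet> u) *\<^sub>R u + (x \<bullet> v) *\<^sub>R v + (x \<bullet> w) *\<^sub>R w) \<bullet> ((y \<bullet> u) *\<^sub>R u + (y \<bullet> v) *\<^sub>R v + (y \<bullet> w) *\<^sub>R w)"
      using ex[of x] ex[of y] by simp
    also have "\<dots> = (x \<bullet> u) * (y \<bullet> u) + (x \<bullet> v) * (y \<bullet> v) + (x \<bullet> w) * (y \<bullet> w)"
      using assms ww ow by (simp add: inner_add_left inner_add_right inner_commute)
    also have "\<dots> = f x \<bullet> f y"
      using assms ww ow by (simp add: f_def inner_add_left inner_add_right inner_commute)
    finally show ?thesis by simp
  qed
  have ot: "orthogonal_transformation f" unfolding orthogonal_transformation_def using lin ip by simp
  define A where "A = matrix f"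
  have Af: "A *v x = f x" for x unfolding A_def using lin by (simp add: matrix_works)
  have oA: "orthogonal_matrix A" using ot[unfolded orthogonal_transformation_matrix] A_def by simp
  have fu: "f u = u'" "f v = v'" "f w = w'"
    using assms ww ow by (simp_all add: f_def inner_commute)
  have "cross3 (A *v u) (A *v v) = det A *\<^sub>R (A *v cross3 u v)" by (rule cross_orthogonal_matrix[OF oA])
  then have "w' = det A *\<^sub>R w'" by (simp add: Af fu w_def[symmetric] w'_def[symmetric])
  then have "det A = 1" using ww(2)
    by (metis inner_zero_left scaleR_cancel_right scaleR_one zero_neq_one)
  then have "rotation_matrix A" using oA by (simp add: rotation_matrix_def)
  then show ?thesis by (intro exI[of _ A]) (simp add: Af fu w_def[symmetric] w'_def[symmetric])
qed

lemma sign_const: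
  fixes f :: "real \<Rightarrow> real"
  assumes "continuous_on I f" "is_interval I" "\<forall>t\<in>I. f t \<noteq> 0"
  shows "(\<forall>t\<in>I. f t > 0) \<or> (\<forall>t\<in>I. f t < 0)"
proof (rule ccontr)
  assume "\<not> ?thesis"
  then obtain a b where ab: "a \<in> I" "b \<in> I" "f a > 0" "f b < 0"
    using assms(3) by (meson linorder_neqE_linordered_idom)
  have sub: "{min a b..max a b} \<subseteq> I" 
  proof
    fix x assume "x \<in> {min a b..max a b}"
    then have "min a b \<le> x" "x \<le> max a b" by auto
    moreover have "min a b \<in> I" "max a b \<in> I" using ab by (auto simp: min_def max_def)
    ultimately show "x \<in> I" using assms(2) unfolding is_interval_1 by blast
  qed
  have c: "continuous_on {min a b..max a b} f" using continuous_on_subset[OF assms(1) sub] .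
  show False
  proof (cases "a \<le> b")
    case True
    then have "continuous_on {a..b} (\<lambda>x. - f x)" using c by (intro continuous_intros) (simp add: min_def max_def)
    from IVT'[of "\<lambda>x. - f x" a 0 b, OF _ _ True this] ab obtain x where "a \<le> x" "x \<le> b" "f x = 0" by auto
    then show False using sub assms(3) True by (auto simp: min_def max_def)
  next
    case False
    then have "continuous_on {b..a} f" using c by (simp add: min_def max_def)
    from IVT'[of f b 0 a, OF _ _ _ this] ab False obtain x where "b \<le> x" "x \<le> a" "f x = 0" by auto
    then show False using sub assms(3) False by (auto simp: min_def max_def)
  qed
qed

lemma unit_eq:
  fixes x y :: "real^3"
  assumes "x \<bullet> x = 1" "y \<bullet> y = 1" "x \<bullet> y = 1"
  shows "x = y"
proof -
  have "(x - y) \<bullet> (x - y) = 0" using assms by (simp add: inner_diff_left inner_diff_right inner_commute)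
  then show ?thesis by simp
qed

lemma unit_le:
  fixes x y :: "real^3"
  assumes "x \<bullet> x = 1" "y \<bullet> y = 1"
  shows "x \<bullet> y \<le> 1"
  using norm_cauchy_schwarz[of x y] assms by (simp add: norm_eq_sqrt_inner)




lemma rot_inner:
  fixes A :: "real^'n^'n"
  assumes "rotation_matrix A"
  shows "(A *v x) \<bullet> (A *v y) = x \<bullet> y"
proof -
  have "orthogonal_transformation (\<lambda>x. A *v x)"
    using orthogonal_transformation_matrix[of "(*v) A"] assms
    by (simp add: rotation_matrix_def matrix_vector_mul_linear)
  then show ?thesis by (simp add: orthogonal_transformation_def)
qed

lemma Aneg: "(A::real^3^3) *v (- x) = - (A *v x)"
  using matrix_vector_mult_scaleR[of A "-1" x] by simp

lemma Amult_vd: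
  "(f has_vector_derivative f') F \<Longrightarrow> ((\<lambda>s. (A::real^3^3) *v f s) has_vector_derivative (A *v f')) F"
  by (rule bounded_linear.has_vector_derivative[OF matrix_vector_mul_bounded_linear])

context frenet begin

lemma conv:
  assumes keq: "\<forall>t\<in>I. k t = \<bar>tau t\<bar>" and C: "\<forall>t\<in>I. (1 / k t) * (- kd t / (k t)^2) = C"
    and ne: "I \<noteq> {}"
  shows "\<exists>A c. rotation_matrix A \<and> (\<forall>t\<in>I. A *v \<xi> t + c = evolute \<xi> t)"
proof -
  have tnz: "\<forall>t\<in>I. tau t \<noteq> 0" using keq kp by fastforce
  obtain \<epsilon> :: real where eps: "\<epsilon> = 1 \<or> \<epsilon> = -1" and teps: "\<forall>t\<in>I. tau t = \<epsilon> * k t"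
    using sign_const[OF cont_tau iv tnz] keq by (metis abs_of_neg abs_of_pos minus_minus mult_1 mult_minus1)
  have ee: "\<epsilon> * \<epsilon> = 1" using eps by auto
  have rp: "- kd t / (k t)^2 = C * k t" if t: "t \<in> I" for t
    using C t kp[OF t] by (auto simp: field_simps)
  define E where "E s = \<xi> s + (1 / k s) *\<^sub>R N s + (\<epsilon> * C) *\<^sub>R B s" for s
  have evE: "evolute \<xi> t = E t" if t: "t \<in> I" for t
  proof -
    have "deriv (\<lambda>s. 1 / curvature \<xi> s) t / torsion \<xi> t = \<epsilon> * C"
      using rderiv[OF t] tors[OF t] rp[OF t] teps t kp[OF t] eps by auto
    then show ?thesis by (simp add: evolute_def E_def curv[OF t] nrm[OF t] bin[OF t])
  qed
  have Eder: "(E has_vector_derivative \<epsilon> *\<^sub>R B t) (at t)" if t: "t \<in> I" for t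
  proof -
    have "(E has_vector_derivative (T t + ((1 / k t) *\<^sub>R ((- k t) *\<^sub>R T t + tau t *\<^sub>R B t) + (- kd t / (k t)^2) *\<^sub>R N t)
           + ((\<epsilon> * C) *\<^sub>R ((- tau t) *\<^sub>R N t) + 0 *\<^sub>R B t))) (at t)"
      unfolding E_def[abs_def]
      by (intro has_vector_derivative_add has_vector_derivative_scaleR rder Nder' Bder DERIV_const t)
         (use D01[OF t] in \<open>simp add: T_def\<close>)
    moreover have "T t + ((1 / k t) *\<^sub>R ((- k t) *\<^sub>R T t + tau t *\<^sub>R B t) + (- kd t / (k t)^2) *\<^sub>R N t)
           + ((\<epsilon> * C) *\<^sub>R ((- tau t) *\<^sub>R N t) + 0 *\<^sub>R B t) = \<epsilon> *\<^sub>R B t"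
      using kp[OF t] teps t rp[OF t] eps by (auto simp: algebra_simps)
    ultimately show ?thesis by simp
  qed
  have evder: "(evolute \<xi> has_vector_derivative \<epsilon> *\<^sub>R B t) (at t)" if t: "t \<in> I" for t
    by (rule has_vector_derivative_transform_within_open[OF Eder[OF t] op t]) (simp add: evE)
  obtain t1 where t1: "t1 \<in> I" using ne by blast
  have "\<exists>A. rotation_matrix A \<and> A *v T t1 = \<epsilon> *\<^sub>R B t1 \<and> A *v N t1 = - N t1 \<and>
           A *v cross3 (T t1) (N t1) = cross3 (\<epsilon> *\<^sub>R B t1) (- N t1)"
    by (rule frame_rot) (use TT[OF t1] NN[OF t1] TN[OF t1] BB[OF t1] NB[of t1] ee in \<open>auto simp: inner_commute\<close>)
  then obtain A where A: "rotation_matrix A" "A *v T t1 = \<epsilon> *\<^sub>R B t1" "A *v N t1 = - N t1"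
     "A *v B t1 = \<epsilon> *\<^sub>R T t1"
    using BN[OF t1] by (auto simp: B_def cross_mult_left)
  define h where "h s = \<epsilon> * ((A *v T s) \<bullet> B s) - (A *v N s) \<bullet> N s + \<epsilon> * ((A *v B s) \<bullet> T s)" for s
  have hder: "(h has_real_derivative 0) (at t)" if t: "t \<in> I" for t
  proof -
    have "(h has_real_derivative
       (\<epsilon> * ((A *v T t) \<bullet> ((- tau t) *\<^sub>R N t) + (A *v (k t *\<^sub>R N t)) \<bullet> B t)
        - ((A *v N t) \<bullet> ((- k t) *\<^sub>R T t + tau t *\<^sub>R B t) + (A *v ((- k t) *\<^sub>R T t + tau t *\<^sub>R B t)) \<bullet> N t)
        + \<epsilon> * ((A *v B t) \<bullet> (k t *\<^sub>R N t) + (A *v ((- tau t) *\<^sub>R N t)) \<bullet> T t))) (at t)"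
      unfolding h_def[abs_def]
      by (intro DERIV_diff DERIV_add DERIV_cmult inner_vd Amult_vd Tder Nder' Bder t)
    moreover have "(\<epsilon> * ((A *v T t) \<bullet> ((- tau t) *\<^sub>R N t) + (A *v (k t *\<^sub>R N t)) \<bullet> B t)
        - ((A *v N t) \<bullet> ((- k t) *\<^sub>R T t + tau t *\<^sub>R B t) + (A *v ((- k t) *\<^sub>R T t + tau t *\<^sub>R B t)) \<bullet> N t)
        + \<epsilon> * ((A *v B t) \<bullet> (k t *\<^sub>R N t) + (A *v ((- tau t) *\<^sub>R N t)) \<bullet> T t)) = 0"
      using teps t eps
      by (auto simp: Aneg matrix_vector_right_distrib matrix_vector_mult_scaleR inner_add_left inner_add_right algebra_simps)
    ultimately show ?thesis by simp
  qed
  obtain h0 where h0: "\<forall>s\<in>I. h s = h0"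
    using has_field_derivative_zero_constant[of I h] iv hder
    by (metis is_interval_convex_1 has_field_derivative_at_within)
  have "h t1 = 3"
    using A TT[OF t1] NN[OF t1] BB[OF t1] ee by (simp add: h_def inner_commute)
  then have h3: "h s = 3" if "s \<in> I" for s using h0 t1 that by auto
  have ATB: "A *v T s = \<epsilon> *\<^sub>R B s" if s: "s \<in> I" for s
  proof -
    have u1: "(A *v T s) \<bullet> (A *v T s) = 1" "(A *v N s) \<bullet> (A *v N s) = 1" "(A *v B s) \<bullet> (A *v B s) = 1"
      using rot_inner[OF A(1)] TT[OF s] NN[OF s] BB[OF s] by auto
    have u2: "(\<epsilon> *\<^sub>R B s) \<bullet> (\<epsilon> *\<^sub>R B s) = 1" "(- N s) \<bullet> (- N s) = 1" "(\<epsilon> *\<^sub>R T s) \<bullet> (\<epsilon> *\<^sub>R T s) = 1"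
      using TT[OF s] NN[OF s] BB[OF s] ee by auto
    have l: "(A *v T s) \<bullet> (\<epsilon> *\<^sub>R B s) \<le> 1" "(A *v N s) \<bullet> (- N s) \<le> 1" "(A *v B s) \<bullet> (\<epsilon> *\<^sub>R T s) \<le> 1"
      using unit_le u1 u2 by blast+
    have "h s = (A *v T s) \<bullet> (\<epsilon> *\<^sub>R B s) + (A *v N s) \<bullet> (- N s) + (A *v B s) \<bullet> (\<epsilon> *\<^sub>R T s)"
      by (simp add: h_def)
    then have "(A *v T s) \<bullet> (\<epsilon> *\<^sub>R B s) = 1" using h3[OF s] l by linarith
    then show ?thesis using unit_eq u1 u2 by blast
  qed
  define q where "q s = evolute \<xi> s - A *v \<xi> s" for s
  have qder: "(q has_vector_derivative 0) (at s within I)" if s: "s \<in> I" for s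
  proof -
    have "(q has_vector_derivative (\<epsilon> *\<^sub>R B s - A *v D 1 s)) (at s)"
      unfolding q_def[abs_def] by (intro has_vector_derivative_diff evder Amult_vd D01 s)
    then show ?thesis using ATB[OF s] by (simp add: T_def has_vector_derivative_at_within)
  qed
  obtain c where "\<And>s. s \<in> I \<Longrightarrow> q s = c"
    using has_vector_derivative_zero_constant[of I q] qder iv is_interval_convex_1 by metis
  then have "\<forall>t\<in>I. A *v \<xi> t + c = evolute \<xi> t" by (auto simp: q_def algebra_simps)
  then show ?thesis using A(1) by blast
qed

end



context frenet begin

lemma fwd:
  assumes tnz: "\<forall>t\<in>I. tau t \<noteq> 0" and A: "rotation_matrix A"
    and eq: "\<forall>t\<in>I. A *v \<xi> t + c = evolute \<xi> t"
  shows "(\<forall>t\<in>I. k t = \<bar>tau t\<bar>) \<and> (\<exists>C. \<forall>t\<in>I. (1 / k t) * (- kd t / (k t)^2) = C)"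
proof -
  define g where "g s = deriv (\<lambda>s. 1 / curvature \<xi> s) s / torsion \<xi> s" for s
  have gI: "g t = (- kd t / (k t)^2) / tau t" if t: "t \<in> I" for t
    using t by (simp add: g_def rderiv tors)
  have evI: "evolute \<xi> t = \<xi> t + (1 / k t) *\<^sub>R N t + g t *\<^sub>R B t" if t: "t \<in> I" for t
    using t by (simp add: evolute_def g_def curv nrm bin)
  define G where "G s = (A *v \<xi> s + c - \<xi> s - (1 / k s) *\<^sub>R N s) \<bullet> B s" for s
  have GI: "G t = g t" if t: "t \<in> I" for t
    using eq t evI[OF t] BB[OF t] NB[of t] by (simp add: G_def inner_add_left)
  have gder: "\<exists>d. (g has_real_derivative d) (at t)" if t: "t \<in> I" for t
  proof -
    have "\<exists>d. (G has_real_derivative d) (at t)"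
      unfolding G_def[abs_def]
      apply (rule exI)
      apply (rule inner_vd)
      apply (rule has_vector_derivative_diff)+
      apply (rule has_vector_derivative_add)
      apply (rule Amult_vd)
      apply (rule D01[OF t])
      apply (rule has_vector_derivative_const)
      apply (rule D01[OF t])
      apply (rule has_vector_derivative_scaleR)
      apply (rule rder[OF t])
      apply (rule Nder'[OF t])
      apply (rule Bder[OF t])
      done
    then show ?thesis using has_field_derivative_transform_within_open[OF _ op t] GI by metis
  qed
  have ATphi: "A *v T t = (tau t / k t + d) *\<^sub>R B t"
    if t: "t \<in> I" and d: "(g has_real_derivative d) (at t)" for t d
  proof -
    have d1: "((\<lambda>s. \<xi> s + (1 / k s) *\<^sub>R N s + g s *\<^sub>R B s) has_vector_derivative
         (D 1 t + ((1 / k t) *\<^sub>R ((- k t) *\<^sub>R T t + tau t *\<^sub>R B t) + (- kd t / (k t)^2) *\<^sub>R N t)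
          + (g t *\<^sub>R ((- tau t) *\<^sub>R N t) + d *\<^sub>R B t))) (at t)"
      by (intro has_vector_derivative_add has_vector_derivative_scaleR D01 rder Nder' Bder t d)
    have d2: "((\<lambda>s. \<xi> s + (1 / k s) *\<^sub>R N s + g s *\<^sub>R B s) has_vector_derivative A *v D 1 t) (at t)"
    proof -
      have "((\<lambda>s. A *v \<xi> s + c) has_vector_derivative A *v D 1 t) (at t)"
        using has_vector_derivative_add[OF Amult_vd[OF D01[OF t], of A] has_vector_derivative_const[of c]] by simp
      then show ?thesis
        by (rule has_vector_derivative_transform_within_open[OF _ op t]) (simp add: eq evI)
    qed
    have "A *v D 1 t = D 1 t + ((1 / k t) *\<^sub>R ((- k t) *\<^sub>R T t + tau t *\<^sub>R B t) + (- kd t / (k t)^2) *\<^sub>R N t)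
          + (g t *\<^sub>R ((- tau t) *\<^sub>R N t) + d *\<^sub>R B t)"
      by (rule vector_derivative_unique_at[OF d2 d1])
    also have "\<dots> = (tau t / k t + d) *\<^sub>R B t"
    proof -
      have gt: "g t * tau t = - kd t / (k t)^2" using gI[OF t] tnz t by simp
      have kk: "1 / k t * - k t = -1" using kp[OF t] by simp
      show ?thesis
        using kp[OF t] by (simp add: T_def scaleR_add_right scaleR_scaleR kk gt algebra_simps)
    qed
    finally show ?thesis by (simp add: T_def)
  qed
  define \<phi> where "\<phi> s = (A *v T s) \<bullet> B s" for s
  have ATB: "A *v T t = \<phi> t *\<^sub>R B t" if t: "t \<in> I" for t
  proof -
    obtain d where d: "(g has_real_derivative d) (at t)" using gder[OF t] by blast
    have e: "A *v T t = (tau t / k t + d) *\<^sub>R B t" using ATphi[OF t d] .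
    have "\<phi> t = tau t / k t + d" using e BB[OF t] by (simp add: \<phi>_def)
    then show ?thesis using e by simp
  qed
  have phi1: "\<phi> t * \<phi> t = 1" if t: "t \<in> I" for t
  proof -
    have "(A *v T t) \<bullet> (A *v T t) = 1" using rot_inner[OF A] TT[OF t] by simp
    then show ?thesis using ATB[OF t] BB[OF t] by simp
  qed
  have cphi: "continuous_on I \<phi>"
    unfolding \<phi>_def[abs_def]
    by (intro continuous_intros cont_B continuous_on_compose2[OF _ cont_T, of UNIV "(*v) A"])
       (auto intro: linear_continuous_on matrix_vector_mul_bounded_linear)
  obtain \<sigma> :: real where sig: "\<sigma> = 1 \<or> \<sigma> = -1" and phs: "\<forall>t\<in>I. \<phi> t = \<sigma>"
  proof -
    have pm: "\<phi> t = 1 \<or> \<phi> t = -1" if "t \<in> I" for t using phi1[OF that] square_eq_1_iff by blast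
    have "\<forall>t\<in>I. \<phi> t \<noteq> 0" using pm by fastforce
    from sign_const[OF cphi iv this] have "(\<forall>t\<in>I. \<phi> t = 1) \<or> (\<forall>t\<in>I. \<phi> t = -1)"
    proof
      assume "\<forall>t\<in>I. \<phi> t > 0" then have "\<forall>t\<in>I. \<phi> t = 1" using pm by fastforce
      then show ?thesis by simp
    next
      assume "\<forall>t\<in>I. \<phi> t < 0" then have "\<forall>t\<in>I. \<phi> t = -1" using pm by fastforce
      then show ?thesis by simp
    qed
    then show ?thesis using that by blast
  qed
  obtain \<epsilon> :: real where eps: "\<epsilon> = 1 \<or> \<epsilon> = -1" and esgn: "\<forall>t\<in>I. \<bar>tau t\<bar> = \<epsilon> * tau t"
    using sign_const[OF cont_tau iv tnz] by (metis abs_of_neg abs_of_pos mult_1 mult_minus1)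
  have ATB': "A *v T t = \<sigma> *\<^sub>R B t" if "t \<in> I" for t using ATB phs that by simp
  have AN: "k t *\<^sub>R (A *v N t) = (- (\<sigma> * tau t)) *\<^sub>R N t" if t: "t \<in> I" for t
  proof -
    have "((\<lambda>s. A *v T s) has_vector_derivative \<sigma> *\<^sub>R ((- tau t) *\<^sub>R N t)) (at t)"
      using has_vector_derivative_transform_within_open[OF bounded_linear.has_vector_derivative[OF bounded_linear_scaleR_right Bder[OF t], of \<sigma>] op t]
            ATB' by simp
    then have "A *v (k t *\<^sub>R N t) = \<sigma> *\<^sub>R ((- tau t) *\<^sub>R N t)"
      using vector_derivative_unique_at Amult_vd[OF Tder[OF t]] by blast
    then show ?thesis by (simp add: matrix_vector_mult_scaleR)
  qed
  have keq: "k t = \<bar>tau t\<bar>" if t: "t \<in> I" for t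
  proof -
    have "(k t *\<^sub>R (A *v N t)) \<bullet> (k t *\<^sub>R (A *v N t)) = k t * k t"
      using rot_inner[OF A] NN[OF t] by simp
    also have "(k t *\<^sub>R (A *v N t)) \<bullet> (k t *\<^sub>R (A *v N t)) = tau t * tau t"
      unfolding AN[OF t] using NN[OF t] sig by auto
    finally have "k t * k t = tau t * tau t" by simp
    then show ?thesis using kp[OF t]
      by (metis abs_mult_self_eq abs_of_pos mult_cancel_right real_sqrt_abs2 power2_eq_square)
  qed
  have teps: "tau t = \<epsilon> * k t" if "t \<in> I" for t
    using keq[OF that] esgn that eps by auto
  have AN': "A *v N t = (- (\<sigma> * \<epsilon>)) *\<^sub>R N t" if t: "t \<in> I" for t
  proof -
    have "k t *\<^sub>R (A *v N t) = k t *\<^sub>R ((- (\<sigma> * \<epsilon>)) *\<^sub>R N t)"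
      using AN[OF t] teps[OF t] by (simp add: algebra_simps)
    then show ?thesis using kp[OF t] scaleR_cancel_left by (metis less_irrefl)
  qed
  have AB: "A *v B t = \<epsilon> *\<^sub>R T t" if t: "t \<in> I" for t
  proof -
    have "A *v B t = cross3 (A *v T t) (A *v N t)" by (simp add: B_def cross_rotation_matrix[OF A])
    also have "\<dots> = (- (\<sigma> * \<sigma> * \<epsilon>)) *\<^sub>R cross3 (B t) (N t)"
      by (simp add: ATB'[OF t] AN'[OF t] cross_mult_left cross_mult_right)
    also have "\<dots> = \<epsilon> *\<^sub>R T t" using BN[OF t] sig by auto
    finally show ?thesis .
  qed
  have se: "\<sigma> = \<epsilon>" if t: "t \<in> I" for t
  proof -
    have "((\<lambda>s. A *v N s) has_vector_derivative (- (\<sigma> * \<epsilon>)) *\<^sub>R ((- k t) *\<^sub>R T t + tau t *\<^sub>R B t)) (at t)"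
      using has_vector_derivative_transform_within_open[OF bounded_linear.has_vector_derivative[OF bounded_linear_scaleR_right Nder'[OF t], of "- (\<sigma> * \<epsilon>)"] op t]
            AN' by simp
    then have e: "A *v ((- k t) *\<^sub>R T t + tau t *\<^sub>R B t) = (- (\<sigma> * \<epsilon>)) *\<^sub>R ((- k t) *\<^sub>R T t + tau t *\<^sub>R B t)"
      using vector_derivative_unique_at Amult_vd[OF Nder'[OF t]] by blast
    have "(A *v ((- k t) *\<^sub>R T t + tau t *\<^sub>R B t)) \<bullet> T t = k t"
      using ATB'[OF t] AB[OF t] teps[OF t] TT[OF t] TB[of t] eps
      by (auto simp: Aneg matrix_vector_mult_diff_distrib matrix_vector_right_distrib matrix_vector_mult_scaleR inner_add_left inner_diff_left inner_add_right inner_diff_right inner_commute)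
    moreover have "((- (\<sigma> * \<epsilon>)) *\<^sub>R ((- k t) *\<^sub>R T t + tau t *\<^sub>R B t)) \<bullet> T t = \<sigma> * \<epsilon> * k t"
      using TT[OF t] TB[of t] by (simp add: inner_add_left inner_diff_right inner_add_right inner_commute)
    ultimately have "k t = \<sigma> * \<epsilon> * k t" using e by simp
    then have "\<sigma> * \<epsilon> = 1" using kp[OF t] by simp
    then show ?thesis using sig eps by auto
  qed
  have gd0: "(g has_real_derivative 0) (at t)" if t: "t \<in> I" for t
  proof -
    obtain d where d: "(g has_real_derivative d) (at t)" using gder[OF t] by blast
    have "(tau t / k t + d) *\<^sub>R B t = \<sigma> *\<^sub>R B t" using ATphi[OF t d] ATB'[OF t] by metis
    then have "tau t / k t + d = \<sigma> \<or> B t = 0" by (simp only: scaleR_cancel_right)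
    then have "tau t / k t + d = \<sigma>" using BB[OF t] by auto
    moreover have "tau t / k t = \<epsilon>" using teps[OF t] kp[OF t] by simp
    ultimately have "d = 0" using se[OF t] by simp
    then show ?thesis using d by simp
  qed
  obtain g0 where g0: "\<forall>s\<in>I. g s = g0"
    using has_field_derivative_zero_constant[of I g] iv gd0
    by (metis is_interval_convex_1 has_field_derivative_at_within)
  have "\<forall>t\<in>I. (1 / k t) * (- kd t / (k t)^2) = g0 * \<epsilon>"
  proof
    fix t assume t: "t \<in> I"
    have "- kd t / (k t)^2 = g0 * tau t" using gI[OF t] g0 t tnz by (auto simp: field_simps)
    then show "(1 / k t) * (- kd t / (k t)^2) = g0 * \<epsilon>" using teps[OF t] kp[OF t] by simp
  qed
  then show ?thesis using keq by blast
qed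

end



lemma powr_mhalf: "x > 0 \<Longrightarrow> x powr (-1/2) = 1 / sqrt x"
proof -
  assume x: "x > 0"
  have e: "(-1/2::real) = - (1/2)" by simp
  have "x powr (-1/2) = inverse (x powr (1/2))" unfolding e by (rule powr_minus)
  also have "\<dots> = 1 / sqrt x" using powr_half_sqrt[of x] x by (simp add: inverse_eq_divide)
  finally show ?thesis .
qed

lemma classify:
  fixes k rp :: "real \<Rightarrow> real"
  assumes op: "open I" and iv: "is_interval I" and kp: "\<forall>t\<in>I. k t > 0"
    and rd: "\<forall>t\<in>I. ((\<lambda>s. 1 / k s) has_real_derivative rp t) (at t)"
  shows "(\<exists>C. \<forall>t\<in>I. (1 / k t) * rp t = C) \<longleftrightarrow>
     ((\<exists>k0. \<forall>t\<in>I. k t = k0) \<or> (\<exists>c>0. \<exists>t0. t0 \<notin> I \<and> (\<forall>t\<in>I. k t = c * \<bar>t - t0\<bar> powr (-1/2))))"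
proof -
  have r2d: "((\<lambda>s. (1 / k s)^2) has_real_derivative (2 * ((1 / k t) * rp t))) (at t)" if t: "t \<in> I" for t
    using DERIV_power[OF rd[rule_format, OF t], of 2] by (simp add: algebra_simps)
  have cv: "convex I" using iv is_interval_convex_1 by blast
  show ?thesis
  proof
    assume "\<exists>C. \<forall>t\<in>I. (1 / k t) * rp t = C"
    then obtain C where C: "\<forall>t\<in>I. (1 / k t) * rp t = C" by blast
    have "((\<lambda>s. (1 / k s)^2 - 2 * C * s) has_real_derivative 0) (at t within I)" if t: "t \<in> I" for t
    proof -
      have d: "((\<lambda>s. (1 / k s)^2 - 2 * C * s) has_real_derivative (2 * ((1 / k t) * rp t) - 2 * C * 1)) (at t)"
        by (rule DERIV_diff[OF r2d[OF t] DERIV_cmult[OF DERIV_ident]])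
      have e: "2 * ((1 / k t) * rp t) - 2 * C * 1 = 0" using C t by simp
      show ?thesis using d unfolding e by (rule has_field_derivative_at_within)
    qed
    then have "\<exists>c. \<forall>x\<in>I. (1 / k x)^2 - 2 * C * x = c" by (rule has_field_derivative_zero_constant[OF cv])
    then obtain D0 where D0: "\<forall>t\<in>I. (1 / k t)^2 - 2 * C * t = D0" by blast
    show "(\<exists>k0. \<forall>t\<in>I. k t = k0) \<or> (\<exists>c>0. \<exists>t0. t0 \<notin> I \<and> (\<forall>t\<in>I. k t = c * \<bar>t - t0\<bar> powr (-1/2)))"
    proof (cases "C = 0")
      case True
      have "k t = 1 / sqrt D0" if t: "t \<in> I" for t
      proof -
        have "(1 / k t)^2 = D0" using D0 t True by auto
        moreover have kt: "k t > 0" using kp t by blast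
        ultimately have "sqrt D0 = 1 / k t" by auto
        then show ?thesis by simp
      qed
      then show ?thesis by blast
    next
      case False
      define t0 where "t0 = - D0 / (2 * C)"
      have eq: "(1 / k t)^2 = 2 * C * (t - t0)" if t: "t \<in> I" for t
        using D0 t False by (auto simp: t0_def field_simps)
      have pos: "0 < 2 * C * (t - t0)" if t: "t \<in> I" for t
      proof -
        have kt: "k t > 0" using kp t by blast
        then have "(1 / k t)^2 > 0" by simp
        then show ?thesis using eq[OF t] by simp
      qed
      have "t0 \<notin> I" using pos by fastforce
      moreover have "k t = (1 / sqrt \<bar>2 * C\<bar>) * \<bar>t - t0\<bar> powr (-1/2)" if t: "t \<in> I" for t
      proof -
        have a: "\<bar>2 * C\<bar> * \<bar>t - t0\<bar> = 2 * C * (t - t0)" using pos[OF t] by (simp add: abs_mult[symmetric])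
        have ne: "\<bar>t - t0\<bar> > 0" using pos[OF t] by auto
        have kt: "k t > 0" using kp t by blast
        have "sqrt ((1 / k t)^2) = 1 / k t" using kt by simp
        then have "1 / k t = sqrt (2 * C * (t - t0))" using eq[OF t] by simp
        also have "\<dots> = sqrt (\<bar>2 * C\<bar> * \<bar>t - t0\<bar>)" using a by simp
        also have "\<dots> = sqrt \<bar>2 * C\<bar> * sqrt \<bar>t - t0\<bar>" by (rule real_sqrt_mult)
        finally have "1 / k t = sqrt \<bar>2 * C\<bar> * sqrt \<bar>t - t0\<bar>" .
        have "k t = 1 / (1 / k t)" using kt by simp
        also have "\<dots> = 1 / (sqrt \<bar>2 * C\<bar> * sqrt \<bar>t - t0\<bar>)" using \<open>1 / k t = sqrt \<bar>2 * C\<bar> * sqrt \<bar>t - t0\<bar>\<close> by simp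
        also have "\<dots> = (1 / sqrt \<bar>2 * C\<bar>) * \<bar>t - t0\<bar> powr (-1/2)" using powr_mhalf[OF ne] by simp
        finally show ?thesis .
      qed
      moreover have "1 / sqrt \<bar>2 * C\<bar> > 0" using False by simp
      ultimately show ?thesis by (intro disjI2 exI[of _ "1 / sqrt \<bar>2 * C\<bar>"] conjI exI[of _ t0]) auto
    qed
  next
    assume "(\<exists>k0. \<forall>t\<in>I. k t = k0) \<or> (\<exists>c>0. \<exists>t0. t0 \<notin> I \<and> (\<forall>t\<in>I. k t = c * \<bar>t - t0\<bar> powr (-1/2)))"
    then show "\<exists>C. \<forall>t\<in>I. (1 / k t) * rp t = C"
    proof
      assume "\<exists>k0. \<forall>t\<in>I. k t = k0"
      then obtain k0 where k0: "\<forall>t\<in>I. k t = k0" by blast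
      have "rp t = 0" if t: "t \<in> I" for t
        by (rule deriv_zero_const_on_open[OF op t _ rd[rule_format, OF t], of "1 / k0"]) (simp add: k0)
      then show ?thesis by auto
    next
      assume "\<exists>c>0. \<exists>t0. t0 \<notin> I \<and> (\<forall>t\<in>I. k t = c * \<bar>t - t0\<bar> powr (-1/2))"
      then obtain c t0 where c: "c > 0" "t0 \<notin> I" and kc: "\<forall>t\<in>I. k t = c * \<bar>t - t0\<bar> powr (-1/2)" by blast
      have "continuous_on I (\<lambda>t. t - t0)" by (intro continuous_intros)
      from sign_const[OF this iv] c(2) have sg: "(\<forall>t\<in>I. t - t0 > 0) \<or> (\<forall>t\<in>I. t - t0 < 0)" by force
      obtain \<sigma> :: real where sig: "\<forall>t\<in>I. \<bar>t - t0\<bar> = \<sigma> * (t - t0)"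
      proof (cases "\<forall>t\<in>I. t - t0 > 0")
        case True then have "\<forall>t\<in>I. \<bar>t - t0\<bar> = 1 * (t - t0)" by auto
        then show ?thesis by (rule that)
      next
        case False then have "\<forall>t\<in>I. t - t0 < 0" using sg by blast
        then have "\<forall>t\<in>I. \<bar>t - t0\<bar> = (-1) * (t - t0)" by auto
        then show ?thesis by (rule that)
      qed
      have r2: "(1 / k t)^2 = \<sigma> * (t - t0) / c^2" if t: "t \<in> I" for t
      proof -
        have ne: "\<bar>t - t0\<bar> > 0" using t c(2) by auto
        have "k t = c / sqrt \<bar>t - t0\<bar>" using kc t powr_mhalf[OF ne] by simp
        then have "(1 / k t)^2 = \<bar>t - t0\<bar> / c^2" using ne by (simp add: power_divide)
        then show ?thesis using sig t by simp
      qed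
      have "(1 / k t) * rp t = \<sigma> / (2 * c^2)" if t: "t \<in> I" for t
      proof -
        have "((\<lambda>s. (1 / k s)^2) has_real_derivative \<sigma> / c^2) (at t)"
        proof (rule has_field_derivative_transform_within_open[OF _ op t])
          show "((\<lambda>s. \<sigma> * (s - t0) / c^2) has_real_derivative \<sigma> / c^2) (at t)"
            using c(1) by (auto intro!: derivative_eq_intros simp: field_simps eval_nat_numeral)
          show "\<And>s. s \<in> I \<Longrightarrow> \<sigma> * (s - t0) / c^2 = (1 / k s)^2" using r2 by simp
        qed
        then have "2 * ((1 / k t) * rp t) = \<sigma> / c^2" using r2d[OF t] DERIV_unique by blast
        moreover have "\<And>x y :: real. 2 * x = y \<Longrightarrow> x = y / 2" by simp
        ultimately have "(1 / k t) * rp t = (\<sigma> / c^2) / 2" by blast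
        then show ?thesis by simp
      qed
      then show ?thesis by blast
    qed
  qed
qed




theorem mainTheorem7:
  fixes \<xi> :: "real \<Rightarrow> real^3" and I :: "real set"
  assumes I_open: "open I" and I_interval: "is_interval I" and I_ne: "I \<noteq> {}"
    and smooth: "smooth_on I \<xi>"
    and arclength: "\<forall>t\<in>I. norm (vd \<xi> t) = 1"
    and k_pos: "\<forall>t\<in>I. curvature \<xi> t > 0"
    and tau_nz: "\<forall>t\<in>I. torsion \<xi> t \<noteq> 0"
  shows "(\<exists>A :: real^3^3. \<exists>c :: real^3. rotation_matrix A \<and>
            (\<forall>t\<in>I. A *v \<xi> t + c = evolute \<xi> t))
     \<longleftrightarrow> ((\<forall>t\<in>I. curvature \<xi> t = \<bar>torsion \<xi> t\<bar>) \<and>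
          ((\<exists>k0. \<forall>t\<in>I. curvature \<xi> t = k0) \<or>
           (\<exists>c>0. \<exists>t0. t0 \<notin> I \<and> (\<forall>t\<in>I. curvature \<xi> t = c * \<bar>t - t0\<bar> powr (-1/2)))))"
proof -
  obtain D where D0: "D 0 = \<xi>" and Dd: "\<And>m t. t \<in> I \<Longrightarrow> (D m has_vector_derivative D (Suc m) t) (at t)"
    using smooth unfolding smooth_on_def by blast
  have D01: "(\<xi> has_vector_derivative D 1 t) (at t)" if "t \<in> I" for t
    using Dd[OF that, of 0] D0 by simp
  have D12: "(D 1 has_vector_derivative D 2 t) (at t)" if "t \<in> I" for t
    using Dd[OF that, of 1] by (simp add: numeral_2_eq_2)
  have vd1: "vd \<xi> t = D 1 t" if t: "t \<in> I" for t
    unfolding vd_def using D01[OF t] by (simp add: vector_derivative_at)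
  have vd2: "vd (vd \<xi>) t = D 2 t" if t: "t \<in> I" for t
  proof -
    have "(vd \<xi> has_vector_derivative D 2 t) (at t)"
      by (rule has_vector_derivative_transform_within_open[OF D12[OF t] I_open t]) (simp add: vd1)
    then show ?thesis by (simp add: vd_def vector_derivative_at)
  qed
  interpret F: frenet \<xi> I D
  proof
    show "open I" by (rule I_open)
    show "is_interval I" by (rule I_interval)
    show "D 0 = \<xi>" by (rule D0)
    show "\<And>m t. t \<in> I \<Longrightarrow> (D m has_vector_derivative D (Suc m) t) (at t)" by (rule Dd)
    show "\<And>t. t \<in> I \<Longrightarrow> norm (D 1 t) = 1" using arclength vd1 by simp
    show "\<And>t. t \<in> I \<Longrightarrow> D 2 t \<noteq> 0" using k_pos vd2 by (fastforce simp: curvature_def)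
  qed
  have ck: "\<And>t. t \<in> I \<Longrightarrow> curvature \<xi> t = F.k t" by (rule F.curv)
  have tt: "\<And>t. t \<in> I \<Longrightarrow> torsion \<xi> t = F.tau t" by (rule F.tors)
  have kp: "\<forall>t\<in>I. F.k t > 0" using F.kp by blast
  have rd: "\<forall>t\<in>I. ((\<lambda>s. 1 / F.k s) has_real_derivative (- F.kd t / (F.k t)^2)) (at t)"
    using F.rder by blast
  note cl = classify[OF I_open I_interval kp rd]
  have tnz: "\<forall>t\<in>I. F.tau t \<noteq> 0" using tau_nz tt by simp
  have rhs: "((\<forall>t\<in>I. curvature \<xi> t = \<bar>torsion \<xi> t\<bar>) \<and>
          ((\<exists>k0. \<forall>t\<in>I. curvature \<xi> t = k0) \<or>
           (\<exists>c>0. \<exists>t0. t0 \<notin> I \<and> (\<forall>t\<in>I. curvature \<xi> t = c * \<bar>t - t0\<bar> powr (-1/2)))))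
     \<longleftrightarrow> ((\<forall>t\<in>I. F.k t = \<bar>F.tau t\<bar>) \<and>
          ((\<exists>k0. \<forall>t\<in>I. F.k t = k0) \<or>
           (\<exists>c>0. \<exists>t0. t0 \<notin> I \<and> (\<forall>t\<in>I. F.k t = c * \<bar>t - t0\<bar> powr (-1/2)))))"
    using ck tt by (simp cong: ball_cong)
  show ?thesis
  proof
    assume "\<exists>A :: real^3^3. \<exists>c :: real^3. rotation_matrix A \<and> (\<forall>t\<in>I. A *v \<xi> t + c = evolute \<xi> t)"
    then obtain A c where A: "rotation_matrix A" "\<forall>t\<in>I. A *v \<xi> t + c = evolute \<xi> t" by blast
    have f: "(\<forall>t\<in>I. F.k t = \<bar>F.tau t\<bar>) \<and> (\<exists>C. \<forall>t\<in>I. (1 / F.k t) * (- F.kd t / (F.k t)^2) = C)"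
      by (rule F.fwd[OF tnz A])
    have g: "(\<exists>k0. \<forall>t\<in>I. F.k t = k0) \<or> (\<exists>c>0. \<exists>t0. t0 \<notin> I \<and> (\<forall>t\<in>I. F.k t = c * \<bar>t - t0\<bar> powr (-1/2)))"
      by (rule iffD1[OF cl conjunct2[OF f]])
    show "(\<forall>t\<in>I. curvature \<xi> t = \<bar>torsion \<xi> t\<bar>) \<and>
          ((\<exists>k0. \<forall>t\<in>I. curvature \<xi> t = k0) \<or>
           (\<exists>c>0. \<exists>t0. t0 \<notin> I \<and> (\<forall>t\<in>I. curvature \<xi> t = c * \<bar>t - t0\<bar> powr (-1/2))))"
      by (rule iffD2[OF rhs conjI[OF conjunct1[OF f] g]])
  next
    assume r: "(\<forall>t\<in>I. curvature \<xi> t = \<bar>torsion \<xi> t\<bar>) \<and>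
          ((\<exists>k0. \<forall>t\<in>I. curvature \<xi> t = k0) \<or>
           (\<exists>c>0. \<exists>t0. t0 \<notin> I \<and> (\<forall>t\<in>I. curvature \<xi> t = c * \<bar>t - t0\<bar> powr (-1/2))))"
    note rr = iffD1[OF rhs r]
    have r': "(\<forall>t\<in>I. F.k t = \<bar>F.tau t\<bar>)" by (rule conjunct1[OF rr])
    have "\<exists>C. \<forall>t\<in>I. (1 / F.k t) * (- F.kd t / (F.k t)^2) = C" by (rule iffD2[OF cl conjunct2[OF rr]])
    then obtain C where "\<forall>t\<in>I. (1 / F.k t) * (- F.kd t / (F.k t)^2) = C" by blast
    from F.conv[OF r' this I_ne] show "\<exists>A :: real^3^3. \<exists>c :: real^3. rotation_matrix A \<and> (\<forall>t\<in>I. A *v \<xi> t + c = evolute \<xi> t)" .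
  qed
qed



end
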